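(* In the Call-by-Value probabilistic $\lambda$-calculus (as defined in the context), for every multi-distribution $\mathbf m$, the set $\mathrm{Lim}_{\mathrm{obs}_{\mathrm{Nnf}}}(\mathbf m,\Rrightarrow_E)$ contains exactly one element.
   Context: Terms $\Lambda_\oplus$: $M::=x\mid\lambda x.M\mid MM\mid M\oplus M$; values $V::=x\mid\lambda x.M$. Contexts $C::=[\,]\mid MC\mid CM\mid\lambda x.C\mid C\oplus M\mid M\oplus C$; weak contexts $W::=[\,]\mid WM\mid MW$. A multi-distribution is a finite multiset $[p_iM_i]_{i\in I}$ with $p_i\in(0,1]$, $\sum_ip_i\le1$; $+$ is multiset union, $q\cdot[p_iM_i]_i=[(qp_i)M_i]_i$, $[M]:=[1M]$. $C[(\lambda x.M)V]\to_{\beta_v}[C[M\{V/x\}]]$; $W[M\oplus N]\to_\oplus[\tfrac12W[M],\tfrac12W[N]]$; $\to:=\to_{\beta_v}\cup\to_\oplus$; surface reduction $\to_s$ is $\to_\oplus$ together with the closure of $\beta_v$ under weak contexts. $M$ is $\to$-normal (surface-normal) if no $\mathbf m$ with $M\to\mathbf m$ ($M\to_s\mathbf m$); $\mathrm{Nnf}$ is the set of $\to$-normal terms. Let $\rightsquigarrow_U$ be the unbiased iteration of weak $\beta_v$-reduction on $\Lambda_\oplus$: if $M\to_wM'$ (closure of $\beta_v$ under weak contexts) then $M\rightsquigarrow_UM'$; if $M$ is $\to_w$-normal: $\lambda x.P\rightsquigarrow_U\lambda x.P'$, $PQ\rightsquigarrow_UP'Q$, $PQ\rightsquigarrow_UPQ'$,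 $P\oplus Q\rightsquigarrow_UP'\oplus Q$, $P\oplus Q\rightsquigarrow_UP\oplus Q'$ whenever $P\rightsquigarrow_UP'$, resp. $Q\rightsquigarrow_UQ'$. $\rightsquigarrow_E$: if $M$ is not surface-normal and $M\to_s\mathbf m$ then $M\rightsquigarrow_E\mathbf m$; if $M$ is surface-normal and $M\rightsquigarrow_UM'$ then $M\rightsquigarrow_E[M']$. Full lifting $\Rrightarrow_E$: least relation with $[M]\Rrightarrow_E[M]$ if $M$ is $\to$-normal; $[M]\Rrightarrow_E\mathbf m$ if $M\rightsquigarrow_E\mathbf m$; $[p_iM_i]_{i\in I}\Rrightarrow_E\sum_ip_i\cdot\mathbf m_i$ if $[M_i]\Rrightarrow_E\mathbf m_i$ for all $i$. $\mathrm{obs}_{\mathrm{Nnf}}([p_iM_i]_{i\in I})$ is the subdistribution $\mu$ on $\mathrm{Nnf}$ with $\mu(N)=\sum_{i:\,M_i=N}p_i$, ordered pointwise. $\mathrm{Lim}_{\mathrm{obs}_{\mathrm{Nnf}}}(\mathbf m,R)$ is the set of all $\sup_n\mathrm{obs}_{\mathrm{Nnf}}(\mathbf m_n)$ over maximal $R$-sequences $(\mathbf m_n)_n$ from $\mathbf m$ (infinite, or finite ending in an $R$-normal element and then continued constantly). *)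

theory Defs
  imports Complex_Main "HOL-Library.Multiset"
begin

datatype trm = Var nat | Lam trm | App trm trm | Choice trm trm

fun is_value :: "trm \<Rightarrow> bool" where
  "is_value (Var _) = True"
| "is_value (Lam _) = True"
| "is_value _ = False"

fun lift :: "nat \<Rightarrow> trm \<Rightarrow> trm" where
  "lift k (Var i) = (if i < k then Var i else Var (Suc i))"
| "lift k (Lam t) = Lam (lift (Suc k) t)"
| "lift k (App s t) = App (lift k s) (lift k t)"
| "lift k (Choice s t) = Choice (lift k s) (lift k t)"

fun subst :: "trm \<Rightarrow> nat \<Rightarrow> trm \<Rightarrow> trm" where
  "subst (Var i) k s = (if k < i then Var (i - 1) else if i = k then s else Var i)"
| "subst (Lam t) k s = Lam (subst t (Suc k) (lift 0 s))"
| "subst (App t u) k s = App (subst t k s) (subst u k s)"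
| "subst (Choice t u) k s = Choice (subst t k s) (subst u k s)"

type_synonym mdist = "(real \<times> trm) multiset"

definition is_mdist :: "mdist \<Rightarrow> bool" where
  "is_mdist m \<longleftrightarrow> (\<forall>(p, M) \<in> set_mset m. 0 < p \<and> p \<le> 1) \<and> sum_mset (image_mset fst m) \<le> 1"

definition scale :: "real \<Rightarrow> mdist \<Rightarrow> mdist" where
  "scale q m = image_mset (\<lambda>(p, M). (q * p, M)) m"

definition dirac :: "trm \<Rightarrow> mdist" where
  "dirac M = {#(1, M)#}"

inductive beta_full :: "trm \<Rightarrow> trm \<Rightarrow> bool" where
  redex: "is_value V \<Longrightarrow> beta_full (App (Lam M) V) (subst M 0 V)"
| appL: "beta_full M M' \<Longrightarrow> beta_full (App M N) (App M' N)"
| appR: "beta_full N N' \<Longrightarrow> beta_full (App M N) (App M N')"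
| lam: "beta_full M M' \<Longrightarrow> beta_full (Lam M) (Lam M')"
| choiceL: "beta_full M M' \<Longrightarrow> beta_full (Choice M N) (Choice M' N)"
| choiceR: "beta_full N N' \<Longrightarrow> beta_full (Choice M N) (Choice M N')"

inductive beta_weak :: "trm \<Rightarrow> trm \<Rightarrow> bool" where
  redex: "is_value V \<Longrightarrow> beta_weak (App (Lam M) V) (subst M 0 V)"
| appL: "beta_weak M M' \<Longrightarrow> beta_weak (App M N) (App M' N)"
| appR: "beta_weak N N' \<Longrightarrow> beta_weak (App M N) (App M N')"

text \<open>oplus_ctx M N1 N2: M = W[P \<oplus> Q], N1 = W[P], N2 = W[Q] for a weak context W.\<close>
inductive oplus_ctx :: "trm \<Rightarrow> trm \<Rightarrow> trm \<Rightarrow> bool" where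
  here: "oplus_ctx (Choice P Q) P Q"
| appL: "oplus_ctx M N1 N2 \<Longrightarrow> oplus_ctx (App M L) (App N1 L) (App N2 L)"
| appR: "oplus_ctx M N1 N2 \<Longrightarrow> oplus_ctx (App L M) (App L N1) (App L N2)"

definition oplus_step :: "trm \<Rightarrow> mdist \<Rightarrow> bool" where
  "oplus_step M m \<longleftrightarrow> (\<exists>N1 N2. oplus_ctx M N1 N2 \<and> m = {#(1/2, N1), (1/2, N2)#})"

definition step :: "trm \<Rightarrow> mdist \<Rightarrow> bool" where
  "step M m \<longleftrightarrow> (\<exists>M'. beta_full M M' \<and> m = dirac M') \<or> oplus_step M m"

definition surface_step :: "trm \<Rightarrow> mdist \<Rightarrow> bool" where
  "surface_step M m \<longleftrightarrow> (\<exists>M'. beta_weak M M' \<and> m = dirac M') \<or> oplus_step M m"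

definition normal :: "trm \<Rightarrow> bool" where
  "normal M \<longleftrightarrow> \<not> (\<exists>m. step M m)"

definition surface_normal :: "trm \<Rightarrow> bool" where
  "surface_normal M \<longleftrightarrow> \<not> (\<exists>m. surface_step M m)"

definition weak_normal :: "trm \<Rightarrow> bool" where
  "weak_normal M \<longleftrightarrow> \<not> (\<exists>M'. beta_weak M M')"

inductive redU :: "trm \<Rightarrow> trm \<Rightarrow> bool" where
  weak: "beta_weak M M' \<Longrightarrow> redU M M'"
| lam: "weak_normal (Lam P) \<Longrightarrow> redU P P' \<Longrightarrow> redU (Lam P) (Lam P')"
| appL: "weak_normal (App P Q) \<Longrightarrow> redU P P' \<Longrightarrow> redU (App P Q) (App P' Q)"
| appR: "weak_normal (App P Q) \<Longrightarrow> redU Q Q' \<Longrightarrow> redU (App P Q) (App P Q')"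
| choiceL: "weak_normal (Choice P Q) \<Longrightarrow> redU P P' \<Longrightarrow> redU (Choice P Q) (Choice P' Q)"
| choiceR: "weak_normal (Choice P Q) \<Longrightarrow> redU Q Q' \<Longrightarrow> redU (Choice P Q) (Choice P Q')"

inductive redE :: "trm \<Rightarrow> mdist \<Rightarrow> bool" where
  surface: "\<not> surface_normal M \<Longrightarrow> surface_step M m \<Longrightarrow> redE M m"
| unbiased: "surface_normal M \<Longrightarrow> redU M M' \<Longrightarrow> redE M (dirac M')"

text \<open>The rules of the paper, for a multiset \<open>[p\<^sub>i M\<^sub>i]\<^sub>i\<^sub>\<in>\<^sub>I\<close>, are
  rendered by structural recursion on the multiset; the single-term rules
  are the relation liftE_single.\<close>
definition liftE_single :: "trm \<Rightarrow> mdist \<Rightarrow> bool" where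
  "liftE_single M m \<longleftrightarrow> (normal M \<and> m = dirac M) \<or> redE M m"

inductive liftE :: "mdist \<Rightarrow> mdist \<Rightarrow> bool" where
  empty: "liftE {#} {#}"
| add: "liftE m n \<Longrightarrow> liftE_single M m' \<Longrightarrow> liftE (add_mset (p, M) m) (n + scale p m')"

text \<open>obs_Nnf as a (sub)distribution on normal terms, i.e. a function trm \<Rightarrow> real
  that is 0 outside Nnf.\<close>
definition obs_Nnf :: "mdist \<Rightarrow> trm \<Rightarrow> real" where
  "obs_Nnf m N = (if normal N then sum_mset (image_mset fst (filter_mset (\<lambda>(p, M). M = N) m)) else 0)"

definition maximal_seq :: "('a \<Rightarrow> 'a \<Rightarrow> bool) \<Rightarrow> 'a \<Rightarrow> (nat \<Rightarrow> 'a) \<Rightarrow> bool" where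
  "maximal_seq R x s \<longleftrightarrow> s 0 = x \<and>
     (\<forall>n. R (s n) (s (Suc n)) \<or> ((\<nexists>y. R (s n) y) \<and> s (Suc n) = s n))"

definition Lim_obs :: "mdist \<Rightarrow> (mdist \<Rightarrow> mdist \<Rightarrow> bool) \<Rightarrow> (trm \<Rightarrow> real) set" where
  "Lim_obs m R = {\<lambda>N. (SUP n. obs_Nnf (s n) N) | s. maximal_seq R m s}"

end

theory Submission imports Defs begin

inductive_cases bwLam: "beta_weak (Lam b) X"
inductive_cases bwVar: "beta_weak (Var i) X"
inductive_cases bwChoice: "beta_weak (Choice a b) X"
inductive_cases bwApp: "beta_weak (App a b) X"
inductive_cases ocLam: "oplus_ctx (Lam b) X Y"
inductive_cases ocVar: "oplus_ctx (Var i) X Y"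
inductive_cases ocChoice: "oplus_ctx (Choice a b) X Y"
inductive_cases ocApp: "oplus_ctx (App a b) X Y"
inductive_cases rULam: "redU (Lam b) X"
inductive_cases rUApp: "redU (App a b) X"
inductive_cases rUChoice: "redU (Choice a b) X"
inductive_cases rUVar: "redU (Var i) X"

lemma bw_value: "is_value V \<Longrightarrow> \<not> beta_weak V X"
  by (cases V) (auto elim: bwLam bwVar)

lemma oc_value: "is_value V \<Longrightarrow> \<not> oplus_ctx V X Y"
  by (cases V) (auto elim: ocLam ocVar)

lemma bw_diamond: "beta_weak M A \<Longrightarrow> beta_weak M B \<Longrightarrow> A = B \<or> (\<exists>N. beta_weak A N \<and> beta_weak B N)"
proof (induction arbitrary: B rule: beta_weak.induct)
  case (redex V M)
  from redex.prems show ?case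
    by (cases rule: bwApp) (use redex.hyps bw_value in \<open>auto elim: bwLam\<close>)
next
  case (appL M M' N)
  from appL.prems show ?case
    by (cases rule: beta_weak.cases) (use appL.hyps appL.IH in \<open>auto elim: bwLam intro: beta_weak.intros\<close>)
next
  case (appR N N' M)
  from appR.prems show ?case
    by (cases rule: beta_weak.cases) (use appR.hyps appR.IH in \<open>auto dest: bw_value intro: beta_weak.intros\<close>)
qed

lemma bw_oc: "beta_weak M A \<Longrightarrow> oplus_ctx M P Q \<Longrightarrow>
   \<exists>P' Q'. oplus_ctx A P' Q' \<and> beta_weak P P' \<and> beta_weak Q Q'"
proof (induction arbitrary: P Q rule: beta_weak.induct)
  case (redex V M)
  from redex.prems show ?case
    by (cases rule: ocApp) (use redex.hyps oc_value in \<open>auto elim: ocLam\<close>)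
next
  case (appL M M' N)
  from appL.prems show ?case
    by (cases rule: oplus_ctx.cases) (use appL.hyps appL.IH in \<open>(meson beta_weak.intros oplus_ctx.intros)+\<close>)
next
  case (appR N N' M)
  from appR.prems show ?case
    by (cases rule: oplus_ctx.cases) (use appR.hyps appR.IH in \<open>(meson beta_weak.intros oplus_ctx.intros)+\<close>)
qed

lemma oc_oc: "oplus_ctx M P1 Q1 \<Longrightarrow> oplus_ctx M P2 Q2 \<Longrightarrow>
  (P1 = P2 \<and> Q1 = Q2) \<or> (\<exists>X11 X12 X21 X22. oplus_ctx P1 X11 X12 \<and> oplus_ctx Q1 X21 X22
     \<and> oplus_ctx P2 X11 X21 \<and> oplus_ctx Q2 X12 X22)"
proof (induction arbitrary: P2 Q2 rule: oplus_ctx.induct)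
  case (here P Q)
  then show ?case by (auto elim: ocChoice)
next
  case (appL M N1 N2 L)
  from appL.prems show ?case
    by (cases rule: oplus_ctx.cases) (use appL.hyps appL.IH in \<open>(metis trm.inject oplus_ctx.intros)+\<close>)
next
  case (appR M N1 N2 L)
  from appR.prems show ?case
    by (cases rule: oplus_ctx.cases) (use appR.hyps appR.IH in \<open>(metis trm.inject oplus_ctx.intros)+\<close>)
qed

lemma wn_Lam[simp]: "weak_normal (Lam b)"
  unfolding weak_normal_def by (auto elim: bwLam)

lemma wn_Choice[simp]: "weak_normal (Choice a b)"
  unfolding weak_normal_def by (auto elim: bwChoice)

lemma wn_Var[simp]: "weak_normal (Var i)"
  unfolding weak_normal_def by (auto elim: bwVar)

lemma wn_App: "weak_normal (App P Q) \<longleftrightarrow> weak_normal P \<and> weak_normal Q \<and> \<not> ((\<exists>b. P = Lam b) \<and> is_value Q)"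
  unfolding weak_normal_def
  by (auto elim!: bwApp intro: beta_weak.intros)

lemma redU_wn: "redU M M' \<Longrightarrow> weak_normal M \<Longrightarrow>
   weak_normal M' \<and> (is_value M' = is_value M) \<and> ((\<exists>b. M' = Lam b) = (\<exists>b. M = Lam b))"
proof (induction rule: redU.induct)
  case (weak M M') then show ?case by (auto simp: weak_normal_def)
next
  case (lam P P') then show ?case by auto
next
  case (appL P Q P') then show ?case by (auto simp: wn_App)
next
  case (appR P Q Q') then show ?case by (auto simp: wn_App)
next
  case (choiceL P Q P') then show ?case by auto
next
  case (choiceR P Q Q') then show ?case by auto
qed

lemma redU_diamond: "redU M A \<Longrightarrow> redU M B \<Longrightarrow> A = B \<or> (\<exists>N. redU A N \<and> redU B N)"
proof (induction arbitrary: B rule: redU.induct)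
  case (weak M M')
  from weak.prems show ?case
  proof (cases rule: redU.cases)
    case (weak) then show ?thesis using bw_diamond[OF weak.hyps] by (meson redU.weak)
  qed (use weak.hyps in \<open>auto simp: weak_normal_def\<close>)
next
  case (lam P P')
  from lam.prems show ?case
  proof (cases rule: redU.cases)
    case (lam P'') then show ?thesis using lam.IH by (metis redU.lam wn_Lam trm.inject(2))
  qed (auto elim: bwLam)
next
  case (appL P Q P')
  from appL.prems show ?case
  proof (cases rule: redU.cases)
    case (weak) then show ?thesis using appL.hyps by (auto simp: weak_normal_def)
  next
    case (appL P'')
    then have e: "B = App P'' Q" "redU P P''" by auto
    show ?thesis
    proof (cases "P' = P''")
      case True then show ?thesis using e by simp
    next
      case False
      then obtain N where N: "redU P' N" "redU P'' N" using appL.IH e by blast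
      have "weak_normal (App P' Q)" "weak_normal (App P'' Q)"
        using redU_wn appL.hyps e by (auto simp: wn_App)
      then show ?thesis using N e by (metis redU.appL)
    qed
  next
    case (appR Q')
    then have e: "B = App P Q'" "redU Q Q'" by auto
    have "weak_normal (App P' Q)" "weak_normal (App P Q')"
      using redU_wn appL.hyps e by (auto simp: wn_App)
    then show ?thesis using e appL.hyps by (metis redU.appL redU.appR)
  qed
next
  case (appR P Q Q')
  from appR.prems show ?case
  proof (cases rule: redU.cases)
    case (weak) then show ?thesis using appR.hyps by (auto simp: weak_normal_def)
  next
    case (appL P')
    then have e: "B = App P' Q" "redU P P'" by auto
    have "weak_normal (App P' Q)" "weak_normal (App P Q')"
      using redU_wn appR.hyps e by (auto simp: wn_App)
    then show ?thesis using e appR.hyps by (metis redU.appL redU.appR)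
  next
    case (appR Q'')
    then have e: "B = App P Q''" "redU Q Q''" by auto
    show ?thesis
    proof (cases "Q' = Q''")
      case True then show ?thesis using e by simp
    next
      case False
      then obtain N where N: "redU Q' N" "redU Q'' N" using appR.IH e by blast
      have "weak_normal (App P Q')" "weak_normal (App P Q'')"
        using redU_wn appR.hyps e by (auto simp: wn_App)
      then show ?thesis using N e by (metis redU.appR)
    qed
  qed
next
  case (choiceL P Q P')
  from choiceL.prems show ?case
  proof (cases rule: redU.cases)
    case (weak) then show ?thesis by (auto elim: bwChoice)
  next
    case (choiceL P'')
    then have e: "B = Choice P'' Q" "redU P P''" by auto
    then show ?thesis using choiceL.IH by (metis redU.choiceL wn_Choice)
  next
    case (choiceR Q')
    then have e: "B = Choice P Q'" "redU Q Q'" by auto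
    then show ?thesis using choiceL.hyps by (metis redU.choiceL redU.choiceR wn_Choice)
  qed
next
  case (choiceR P Q Q')
  from choiceR.prems show ?case
  proof (cases rule: redU.cases)
    case (weak) then show ?thesis by (auto elim: bwChoice)
  next
    case (choiceL P')
    then have e: "B = Choice P' Q" "redU P P'" by auto
    then show ?thesis using choiceR.hyps by (metis redU.choiceL redU.choiceR wn_Choice)
  next
    case (choiceR Q'')
    then have e: "B = Choice P Q''" "redU Q Q''" by auto
    then show ?thesis using choiceR.IH by (metis redU.choiceR wn_Choice)
  qed
qed


lemma sn_iff: "surface_normal M \<longleftrightarrow> weak_normal M \<and> \<not> (\<exists>P Q. oplus_ctx M P Q)"
  unfolding surface_normal_def surface_step_def oplus_step_def weak_normal_def by auto

lemma sn_redU: "redU M M' \<Longrightarrow> surface_normal M \<Longrightarrow> surface_normal M'"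
proof (induction rule: redU.induct)
  case (weak M M') then show ?case by (auto simp: sn_iff weak_normal_def)
next
  case (lam P P') then show ?case by (auto simp: sn_iff elim: ocLam)
next
  case (appL P Q P')
  have "surface_normal P" using appL.prems
    by (auto simp: sn_iff wn_App intro: oplus_ctx.intros)
  then have "surface_normal P'" using appL.IH by blast
  moreover have "weak_normal (App P' Q)" using redU_wn appL.hyps by (auto simp: wn_App)
  ultimately show ?case using appL.prems
    by (simp add: sn_iff) (metis ocApp oplus_ctx.appL oplus_ctx.appR)
next
  case (appR P Q Q')
  have "surface_normal Q" using appR.prems
    by (auto simp: sn_iff wn_App intro: oplus_ctx.intros)
  then have "surface_normal Q'" using appR.IH by blast
  moreover have "weak_normal (App P Q')" using redU_wn appR.hyps by (auto simp: wn_App)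
  ultimately show ?case using appR.prems
    by (simp add: sn_iff) (metis ocApp oplus_ctx.appL oplus_ctx.appR)
next
  case (choiceL P Q P') then show ?case by (meson oplus_ctx.here sn_iff)
next
  case (choiceR P Q Q') then show ?case by (meson oplus_ctx.here sn_iff)
qed

lemma bw_full: "beta_weak M M' \<Longrightarrow> beta_full M M'"
  by (induction rule: beta_weak.induct) (auto intro: beta_full.intros)

lemma redU_full: "redU M M' \<Longrightarrow> beta_full M M'"
  by (induction rule: redU.induct) (auto intro: beta_full.intros bw_full)

lemma full_redU: "beta_full M M' \<Longrightarrow> \<exists>M''. redU M M''"
proof (induction rule: beta_full.induct)
  case (redex V M) then show ?case by (meson beta_weak.redex redU.weak)
next
  case (appL M M' N) then show ?case by (meson redU.appL redU.weak weak_normal_def)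
next
  case (appR N N' M) then show ?case by (meson redU.appR redU.weak weak_normal_def)
next
  case (lam M M') then show ?case by (meson redU.lam wn_Lam)
next
  case (choiceL M M' N) then show ?case by (meson redU.choiceL wn_Choice)
next
  case (choiceR N N' M) then show ?case by (meson redU.choiceR wn_Choice)
qed

lemma redE_nn: "redE M m \<Longrightarrow> \<not> normal M"
proof (induction rule: redE.induct)
  case (surface M m) then show ?case
    unfolding normal_def step_def surface_step_def using bw_full by blast
next
  case (unbiased M M') then show ?case
    unfolding normal_def step_def using redU_full by blast
qed

lemma redE_ex: "\<not> normal M \<Longrightarrow> \<exists>m. redE M m"
proof -
  assume nn: "\<not> normal M"
  show ?thesis
  proof (cases "surface_normal M")
    case False then show ?thesis using redE.surface surface_normal_def by blast
  next
    case True
    from nn obtain m where "step M m" unfolding normal_def by blast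
    then have "\<exists>M'. beta_full M M'" using True
      unfolding step_def surface_normal_def surface_step_def by blast
    then obtain M'' where "redU M M''" using full_redU by blast
    then show ?thesis using True redE.unbiased by blast
  qed
qed

lemma single_ex: "\<exists>m. liftE_single M m"
  unfolding liftE_single_def using redE_ex by blast

lemma single_normal: "normal M \<Longrightarrow> liftE_single M m \<Longrightarrow> m = dirac M"
  unfolding liftE_single_def using redE_nn by blast

lemma rs: "redE A r \<Longrightarrow> liftE_single A r \<and> \<not> normal A"
  unfolding liftE_single_def using redE_nn by blast

lemma scale_one[simp]: "scale 1 m = m"
  unfolding scale_def by (induction m) auto

lemma scale_empty[simp]: "scale q {#} = {#}"
  unfolding scale_def by simp

lemma scale_add_mset[simp]: "scale q (add_mset (p, M) m) = add_mset (q * p, M) (scale q m)"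
  unfolding scale_def by simp

lemma scale_plus[simp]: "scale q (a + b) = scale q a + scale q b"
  unfolding scale_def by simp

lemma scale_scale[simp]: "scale q (scale p a) = scale (q * p) a"
  unfolding scale_def by (induction a) auto

lemma liftE_dirac: "liftE_single A r \<Longrightarrow> liftE (dirac A) r"
  using liftE.add[OF liftE.empty, of A r 1] by (simp add: dirac_def)

lemma liftE_two: "liftE_single A ra \<Longrightarrow> liftE_single B rb \<Longrightarrow>
   liftE {#(p, A), (q, B)#} (scale p ra + scale q rb)"
  using liftE.add[OF liftE.add[OF liftE.empty, of B rb q], of A ra p] by (simp add: add.commute)

lemma ss_redE: "surface_step A m \<Longrightarrow> redE A m"
  by (meson redE.surface surface_normal_def)

lemma dirac_mem[simp]: "x \<in># dirac A \<longleftrightarrow> x = (1, A)"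
  by (simp add: dirac_def)

definition joins :: "mdist \<Rightarrow> mdist \<Rightarrow> bool" where
  "joins m1 m2 \<longleftrightarrow> (\<exists>r. liftE m1 r \<and> liftE m2 r \<and>
   (\<forall>x\<in>#m1. \<not> normal (snd x)) \<and> (\<forall>x\<in>#m2. \<not> normal (snd x)))"

lemma joins_sym: "joins m1 m2 \<Longrightarrow> joins m2 m1"
  unfolding joins_def by blast

lemma bw_redE: "beta_weak A N \<Longrightarrow> redE A (dirac N)"
  using ss_redE surface_step_def by blast

lemma oc_redE: "oplus_ctx A P Q \<Longrightarrow> redE A {#(1/2, P), (1/2, Q)#}"
  using ss_redE surface_step_def oplus_step_def by blast

lemma dia_bb: "beta_weak M A \<Longrightarrow> beta_weak M B \<Longrightarrow> dirac A = dirac B \<or> joins (dirac A) (dirac B)"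
proof -
  assume a: "beta_weak M A" "beta_weak M B"
  show ?thesis
  proof (cases "A = B")
    case False
    then obtain N where N: "beta_weak A N" "beta_weak B N" using bw_diamond[OF a] by blast
    have "liftE (dirac A) (dirac N)" "liftE (dirac B) (dirac N)" "\<not> normal A" "\<not> normal B"
      using rs[OF bw_redE[OF N(1)]] rs[OF bw_redE[OF N(2)]] liftE_dirac by auto
    then show ?thesis unfolding joins_def by (auto simp: dirac_def)
  qed simp
qed

lemma dia_bo: "beta_weak M A \<Longrightarrow> oplus_ctx M P Q \<Longrightarrow> joins (dirac A) {#(1/2, P), (1/2, Q)#}"
proof -
  assume a: "beta_weak M A" "oplus_ctx M P Q"
  obtain P' Q' where b: "oplus_ctx A P' Q'" "beta_weak P P'" "beta_weak Q Q'"
    using bw_oc[OF a] by blast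
  have 1: "liftE (dirac A) {#(1/2, P'), (1/2, Q')#}" "\<not> normal A"
    using rs[OF oc_redE[OF b(1)]] liftE_dirac by auto
  have 2: "liftE {#(1/2, P), (1/2, Q)#} (scale (1/2) (dirac P') + scale (1/2) (dirac Q'))"
    "\<not> normal P" "\<not> normal Q"
    using rs[OF bw_redE[OF b(2)]] rs[OF bw_redE[OF b(3)]] liftE_two by blast+
  have "scale (1/2) (dirac P') + scale (1/2) (dirac Q') = {#(1/2, P'), (1/2, Q')#}"
    by (simp add: dirac_def)
  then show ?thesis using 1 2 unfolding joins_def by auto
qed

lemma dia_oo: "oplus_ctx M P1 Q1 \<Longrightarrow> oplus_ctx M P2 Q2 \<Longrightarrow>
   {#(1/2::real, P1), (1/2, Q1)#} = {#(1/2, P2), (1/2, Q2)#} \<or> joins {#(1/2, P1), (1/2, Q1)#} {#(1/2, P2), (1/2, Q2)#}"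
proof -
  assume a: "oplus_ctx M P1 Q1" "oplus_ctx M P2 Q2"
  show ?thesis
  proof (cases "P1 = P2 \<and> Q1 = Q2")
    case False
    then obtain X11 X12 X21 X22 where X: "oplus_ctx P1 X11 X12" "oplus_ctx Q1 X21 X22"
     "oplus_ctx P2 X11 X21" "oplus_ctx Q2 X12 X22" using oc_oc[OF a] by blast
    have 1: "liftE {#(1/2, P1), (1/2, Q1)#} (scale (1/2) {#(1/2, X11), (1/2, X12)#} + scale (1/2) {#(1/2, X21), (1/2, X22)#})"
      "\<not> normal P1" "\<not> normal Q1"
      using rs[OF oc_redE[OF X(1)]] rs[OF oc_redE[OF X(2)]] liftE_two by blast+
    have 2: "liftE {#(1/2, P2), (1/2, Q2)#} (scale (1/2) {#(1/2, X11), (1/2, X21)#} + scale (1/2) {#(1/2, X12), (1/2, X22)#})"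
      "\<not> normal P2" "\<not> normal Q2"
      using rs[OF oc_redE[OF X(3)]] rs[OF oc_redE[OF X(4)]] liftE_two by blast+
    have eq: "scale (1/2) {#(1/2, X11), (1/2, X12)#} + scale (1/2) {#(1/2, X21), (1/2, X22)#}
        = scale (1/2) {#(1/2, X11), (1/2, X21)#} + scale (1/2) {#(1/2, X12), (1/2, X22)#}"
      by (simp add: add_mset_commute)
    have l2: "liftE {#(1/2, P2), (1/2, Q2)#} (scale (1/2) {#(1/2, X11), (1/2, X12)#} + scale (1/2) {#(1/2, X21), (1/2, X22)#})"
      by (subst eq) (rule 2(1))
    have "joins {#(1/2, P1), (1/2, Q1)#} {#(1/2, P2), (1/2, Q2)#}"
      unfolding joins_def
      by (rule exI[of _ "scale (1/2) {#(1/2, X11), (1/2, X12)#} + scale (1/2) {#(1/2, X21), (1/2, X22)#}"])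
        (use 1 2(2,3) l2 in auto)
    then show ?thesis by blast
  qed auto
qed

lemma redE_diamond: "redE M m1 \<Longrightarrow> redE M m2 \<Longrightarrow> m1 = m2 \<or> joins m1 m2"
proof -
  assume h1: "redE M m1" and h2: "redE M m2"
  show ?thesis
  proof (cases "surface_normal M")
    case False
    then have s1: "surface_step M m1" and s2: "surface_step M m2" using h1 h2
      by (auto elim: redE.cases)
    from s1 s2 show ?thesis unfolding surface_step_def oplus_step_def
      using dia_bb dia_bo dia_oo joins_sym by blast
  next
    case True
    then obtain A B where u: "m1 = dirac A" "m2 = dirac B" "redU M A" "redU M B" using h1 h2
      by (auto elim!: redE.cases)
    show ?thesis
    proof (cases "A = B")
      case False
      then obtain N where N: "redU A N" "redU B N" using redU_diamond u by blast
      have "redE A (dirac N)" "redE B (dirac N)"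
        using redE.unbiased sn_redU True u N by blast+
      then have "liftE (dirac A) (dirac N)" "liftE (dirac B) (dirac N)" "\<not> normal A" "\<not> normal B"
        using rs liftE_dirac by blast+
      then show ?thesis unfolding joins_def u by (auto simp: dirac_def)
    qed (use u in simp)
  qed
qed


lemma liftE_plus: "liftE a c \<Longrightarrow> liftE b d \<Longrightarrow> liftE (a + b) (c + d)"
proof (induction arbitrary: b d rule: liftE.induct)
  case empty then show ?case by simp
next
  case (add m n M m' p)
  have "liftE (add_mset (p, M) (m + b)) ((n + d) + scale p m')"
    using add by (intro liftE.add) auto
  then show ?case by (simp add: ac_simps)
qed

lemma liftE_scale: "liftE a c \<Longrightarrow> liftE (scale q a) (scale q c)"
proof (induction rule: liftE.induct)
  case empty then show ?case by (simp add: liftE.empty)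
next
  case (add m n M m' p)
  then show ?case using liftE.add[OF add.IH add.hyps(2), of "q * p"] by simp
qed

lemma liftE_inv: "liftE A n \<Longrightarrow> A = add_mset (p, M) m \<Longrightarrow>
  \<exists>n' m'. liftE m n' \<and> liftE_single M m' \<and> n = n' + scale p m'"
proof (induction arbitrary: m rule: liftE.induct)
  case empty then show ?case by simp
next
  case (add m0 n0 M0 m0' p0)
  show ?case
  proof (cases "(p0, M0) = (p, M)")
    case True then show ?thesis using add by auto
  next
    case False
    then have "(p, M) \<in># m0" using add.prems
      by (metis insert_noteq_member prod.inject)
    then obtain m1 where m1: "m0 = add_mset (p, M) m1" by (metis multi_member_split)
    then have mm: "m = add_mset (p0, M0) m1" using add.prems by (simp add: add_mset_commute)
    from add.IH[OF m1] obtain n' m' where h: "liftE m1 n'" "liftE_single M m'" "n0 = n' + scale p m'"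
      by blast
    have "liftE m (n' + scale p0 m0')" using liftE.add[OF h(1) add.hyps(2)] mm by simp
    then show ?thesis using h by (intro exI[of _ "n' + scale p0 m0'"] exI[of _ m']) (simp add: ac_simps)
  qed
qed

lemma liftE_ex: "\<exists>n. liftE m n"
proof (induction m)
  case empty then show ?case by (blast intro: liftE.empty)
next
  case (add x m)
  then obtain n where "liftE m n" by blast
  moreover obtain m' where "liftE_single (snd x) m'" using single_ex by blast
  ultimately show ?case using liftE.add[of m n "snd x" m' "fst x"] by (cases x) auto
qed

lemma obs_empty[simp]: "obs_Nnf {#} = (\<lambda>N. 0)"
  unfolding obs_Nnf_def by auto

lemma obs_add_mset: "obs_Nnf (add_mset (p, M) m) N = (if normal N \<and> M = N then p else 0) + obs_Nnf m N"
  unfolding obs_Nnf_def by auto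

lemma obs_plus: "obs_Nnf (a + b) N = obs_Nnf a N + obs_Nnf b N"
  unfolding obs_Nnf_def by auto

lemma obs_scale: "obs_Nnf (scale q a) N = q * obs_Nnf a N"
proof (induction a)
  case empty then show ?case by simp
next
  case (add x a) then show ?case by (cases x) (simp add: obs_add_mset algebra_simps)
qed

lemma obs_nn: "\<forall>x\<in>#m. \<not> normal (snd x) \<Longrightarrow> obs_Nnf m = (\<lambda>N. 0)"
proof (induction m)
  case empty then show ?case by simp
next
  case (add x m) then show ?case by (cases x) (auto simp: obs_add_mset fun_eq_iff)
qed

lemma single_diamond: "liftE_single M m1 \<Longrightarrow> liftE_single M m2 \<Longrightarrow>
  \<exists>r. liftE m1 r \<and> liftE m2 r \<and> obs_Nnf m1 = obs_Nnf m2"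
proof -
  assume a: "liftE_single M m1" "liftE_single M m2"
  show ?thesis
  proof (cases "m1 = m2")
    case True then show ?thesis using liftE_ex by blast
  next
    case False
    have "redE M m1" "redE M m2"
      using a False single_normal unfolding liftE_single_def by blast+
    then have "joins m1 m2" using redE_diamond False by blast
    then show ?thesis unfolding joins_def using obs_nn by metis
  qed
qed

lemma lift_diamond: "liftE m n1 \<Longrightarrow> liftE m n2 \<Longrightarrow>
  \<exists>r. liftE n1 r \<and> liftE n2 r \<and> obs_Nnf n1 = obs_Nnf n2"
proof (induction arbitrary: n2 rule: liftE.induct)
  case empty
  then have "n2 = {#}" by (auto elim: liftE.cases)
  then show ?case using liftE.empty by blast
next
  case (add m n M m' p)
  obtain n' m'' where h: "liftE m n'" "liftE_single M m''" "n2 = n' + scale p m''"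
    using liftE_inv[OF add.prems refl] by blast
  obtain r0 where r0: "liftE n r0" "liftE n' r0" "obs_Nnf n = obs_Nnf n'" using add.IH h(1) by blast
  obtain r1 where r1: "liftE m' r1" "liftE m'' r1" "obs_Nnf m' = obs_Nnf m''"
    using single_diamond[OF add.hyps(2) h(2)] by blast
  have "liftE (n + scale p m') (r0 + scale p r1)" "liftE n2 (r0 + scale p r1)"
    using liftE_plus liftE_scale r0 r1 h(3) by blast+
  moreover have "obs_Nnf (n + scale p m') = obs_Nnf n2"
    using r0(3) r1(3) h(3) by (simp add: fun_eq_iff obs_plus obs_scale)
  ultimately show ?case by blast
qed

definition chain :: "(nat \<Rightarrow> mdist) \<Rightarrow> bool" where
  "chain s \<longleftrightarrow> (\<forall>n. liftE (s n) (s (Suc n)))"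

lemma chain_obs: "chain s \<Longrightarrow> chain t \<Longrightarrow> s 0 = t 0 \<Longrightarrow> obs_Nnf (s n) = obs_Nnf (t n)"
proof (induction n arbitrary: s t)
  case 0 then show ?case by simp
next
  case (Suc n)
  have st: "liftE (s 0) (s 1)" "liftE (s 0) (t 1)" using Suc.prems unfolding chain_def by (metis One_nat_def)+
  obtain r where r: "liftE (s 1) r" "liftE (t 1) r" "obs_Nnf (s 1) = obs_Nnf (t 1)"
    using lift_diamond[OF st] by blast
  define u where "u = (\<lambda>k. ((\<lambda>x. SOME y. liftE x y) ^^ k) r)"
  have u: "chain u" unfolding chain_def u_def using liftE_ex by (simp add: someI_ex)
  define a where "a = (\<lambda>k. if k = 0 then s 1 else u (k - 1))"
  define b where "b = (\<lambda>k. if k = 0 then t 1 else u (k - 1))"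
  have u0: "u 0 = r" by (simp add: u_def)
  have ca: "chain a" unfolding chain_def
  proof
    fix k show "liftE (a k) (a (Suc k))" using u u0 r unfolding chain_def a_def by (cases k) auto
  qed
  have cb: "chain b" unfolding chain_def
  proof
    fix k show "liftE (b k) (b (Suc k))" using u u0 r unfolding chain_def b_def by (cases k) auto
  qed
  have cs: "chain (\<lambda>k. s (Suc k))" "chain (\<lambda>k. t (Suc k))" using Suc.prems unfolding chain_def by auto
  have "obs_Nnf (s (Suc n)) = obs_Nnf (a n)" using Suc.IH[OF cs(1) ca] by (simp add: a_def)
  moreover have "obs_Nnf (t (Suc n)) = obs_Nnf (b n)" using Suc.IH[OF cs(2) cb] by (simp add: b_def)
  moreover have "obs_Nnf (a n) = obs_Nnf (b n)" using r(3) by (simp add: a_def b_def)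
  ultimately show ?case by simp
qed

lemma maximal_chain: "maximal_seq liftE m s \<longleftrightarrow> s 0 = m \<and> chain s"
  unfolding maximal_seq_def chain_def using liftE_ex by blast

theorem mainTheorem10:
  assumes "is_mdist m"
  shows "\<exists>\<mu>. Lim_obs m liftE = {\<mu>}"
proof -
  define s0 where "s0 = (\<lambda>k. ((\<lambda>x. SOME y. liftE x y) ^^ k) m)"
  have c0: "chain s0" unfolding chain_def s0_def using liftE_ex by (simp add: someI_ex)
  have m0: "maximal_seq liftE m s0" using c0 by (simp add: maximal_chain s0_def)
  define \<mu> where "\<mu> = (\<lambda>N. SUP n. obs_Nnf (s0 n) N)"
  have "Lim_obs m liftE = {\<mu>}"
  proof
    show "{\<mu>} \<subseteq> Lim_obs m liftE" unfolding Lim_obs_def \<mu>_def using m0 by blast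
  next
    show "Lim_obs m liftE \<subseteq> {\<mu>}"
    proof
      fix f assume "f \<in> Lim_obs m liftE"
      then obtain s where s: "maximal_seq liftE m s" and f: "f = (\<lambda>N. SUP n. obs_Nnf (s n) N)"
        unfolding Lim_obs_def by blast
      have "\<And>n. obs_Nnf (s n) = obs_Nnf (s0 n)"
        using s m0 chain_obs unfolding maximal_chain by metis
      then show "f \<in> {\<mu>}" unfolding f \<mu>_def by simp
    qed
  qed
  then show ?thesis by blast
qed

end
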